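(* For every $(x,a)\in H\times\mathcal{A}$, $Q^{\delta,\mathscr{P}}_{\pi}(x,a)$ equals the optimal value of the convex program \[ \inf_{\lambda\ge0,\ h:\mathcal{X}\to\mathbb{R}}\ \Big(\lambda\delta+\sum_{y\in\mathcal{X}}h(y)P_{x,a}(y)\Big) \] subject to \[ \max_{l\in\mathcal{X}}\Big(-\lambda|l-y|+c(x,a,l)+\sum_{a'\in\mathcal{A}}Q^{\delta,\mathscr{P}}_{\pi}(l,a')\pi(a'|l)\Big)\le h(y)\quad\text{for all }y\in\mathcal{X}, \] where $c(x,a,l)=1$ if $l\in U$ and $c(x,a,l)=0$ otherwise.
   Context: Consider a Markov decision process with a finite state set $\mathcal{X}$, viewed as a subset of $\mathbb{R}$ (so $|y-z|$ is the distance between states), and a finite action set $\mathcal{A}$. The state set is partitioned into a goal set $E$, a forbidden (unsafe) set $U$, and $H:=\mathcal{X}\setminus(E\cup U)$; $E$ and $U$ are terminal (the process stops there). For each $(x,a)\in H\times\mathcal{A}$ a nominal transition probability $\mathcal{P}_{x,a}=\{P_{x,a}(y)\}_{y\in\mathcal{X}}$ on $\mathcal{X}$ is given, and $\mathscr{P}=\{\mathcal{P}_{x,a}\}_{(x,a)\in H\times\mathcal{A}}$; transition probabilities are time-invariant. The sample space is $\Omega=(\mathcal{X}\times\mathcal{A})^{\infty}$ with coordinate processes $X_t,A_t$. A stationary policy is $\pi:\mathcal{X}\to\mathscr{M}(\mathcal{A})$, written $\pi(a|x)$. For any collection $\tilde{\mathscr{P}}=\{\tilde{\mathcal{P}}_{x,a}\}_{(x,a)\in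 H\times\mathcal{A}}$ of transition probabilities, $\mathbb{E}^{\tilde{\mathscr{P}}}_{\pi}$ denotes expectation for the process with $X_{t+1}\sim\tilde{\mathcal{P}}_{X_t,A_t}$ and $A_t\sim\pi(\cdot|X_t)$ (except when $A_0$ is conditioned on). For $S\subseteq\mathcal{X}$, $\tau_S$ is the first hitting time of $S$, and $\tau=\tau_{E\cup U}$. The 1-Wasserstein distance between probability measures $\mu,\nu$ on $\mathcal{X}$ is $W(\mu,\nu)=\min\{\sum_{(y,z)}\Gamma(y,z)|y-z| : \Gamma\in\mathscr{M}(\mathcal{X}\times\mathcal{X}),\ \sum_z\Gamma(y,z)=\mu(y),\ \sum_y\Gamma(y,z)=\nu(z)\}$. For $\delta\ge0$, $\mathcal{D}^{\delta}_{x,a}=\{\tilde{\mathcal{P}}_{x,a}\in\mathscr{M}(\mathcal{X}): W(\tilde{\mathcal{P}}_{x,a},\mathcal{P}_{x,a})\le\delta\}$ and $\mathscr{D}^{\delta}=\prod_{(x,a)\in H\times\mathcal{A}}\mathcal{D}^{\delta}_{x,a}$. The robust Q-function is $Q^{\delta,\mathscr{P}}_{\pi}(x,a)=\sup_{\tilde{\mathscr{P}}\in\mathscr{D}^{\delta}}\mathbb{E}^{\tilde{\mathscr{P}}}_{\pi}\big[\sum_{t=0}^{\tau-1}c_{t+1}\mid X_0=x,A_0=a\big]$, where $c_{t+1}=1$ if $X_{t+1}\in U$ and $0$ otherwise; by the same formula (empty sum, since $\tau=0$), $Q^{\delta,\mathscr{P}}_{\pi}(l,a')=0$ for terminal states $l\in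 E\cup U$. *)

theory Defs
  imports "HOL-Analysis.Analysis"
begin

definition is_dist :: "'b set \<Rightarrow> ('b \<Rightarrow> real) \<Rightarrow> bool" where
  "is_dist S \<mu> \<longleftrightarrow> (\<forall>y\<in>S. 0 \<le> \<mu> y) \<and> (\<Sum>y\<in>S. \<mu> y) = 1 \<and> (\<forall>y. y \<notin> S \<longrightarrow> \<mu> y = 0)"

definition couplings :: "real set \<Rightarrow> (real \<Rightarrow> real) \<Rightarrow> (real \<Rightarrow> real) \<Rightarrow> (real \<times> real \<Rightarrow> real) set" where
  "couplings X \<mu> \<nu> = {\<Gamma>. (\<forall>p\<in>X \<times> X. 0 \<le> \<Gamma> p)
      \<and> (\<forall>y\<in>X. (\<Sum>z\<in>X. \<Gamma> (y, z)) = \<mu> y)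
      \<and> (\<forall>z\<in>X. (\<Sum>y\<in>X. \<Gamma> (y, z)) = \<nu> z)}"

text \<open>1-Wasserstein distance (the minimum is attained; we write it as an infimum).\<close>
definition wasserstein :: "real set \<Rightarrow> (real \<Rightarrow> real) \<Rightarrow> (real \<Rightarrow> real) \<Rightarrow> real" where
  "wasserstein X \<mu> \<nu> = Inf ((\<lambda>\<Gamma>. \<Sum>p\<in>X \<times> X. \<Gamma> p * \<bar>fst p - snd p\<bar>) ` couplings X \<mu> \<nu>)"

definition ambiguity_set ::
  "real set \<Rightarrow> real set \<Rightarrow> 'a set \<Rightarrow> real \<Rightarrow> (real \<Rightarrow> 'a \<Rightarrow> real \<Rightarrow> real)
     \<Rightarrow> (real \<Rightarrow> 'a \<Rightarrow> real \<Rightarrow> real) set" where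
  "ambiguity_set X H A \<delta> P = {Pt. \<forall>x\<in>H. \<forall>a\<in>A.
       is_dist X (Pt x a) \<and> wasserstein X (Pt x a) (P x a) \<le> \<delta>}"

text \<open>Probability P(X_1=y_1,A_1=b_1,...,X_t=y_t,A_t=b_t,X_{t+1}=z | X_0=x, A_0=a)
  under kernel Pt and policy pi, where the list is [(y_1,b_1),...,(y_t,b_t)].\<close>
fun traj_prob :: "(real \<Rightarrow> 'a \<Rightarrow> real \<Rightarrow> real) \<Rightarrow> (real \<Rightarrow> 'a \<Rightarrow> real)
     \<Rightarrow> real \<Rightarrow> 'a \<Rightarrow> (real \<times> 'a) list \<Rightarrow> real \<Rightarrow> real" where
  "traj_prob Pt \<pi> x a [] z = Pt x a z"
| "traj_prob Pt \<pi> x a ((y, b) # rest) z = Pt x a y * \<pi> y b * traj_prob Pt \<pi> y b rest z"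

definition cost :: "real set \<Rightarrow> real \<Rightarrow> real" where
  "cost U l = (if l \<in> U then 1 else 0)"

text \<open>Truncated expected cost
  E^{Pt}_pi [ sum_{t < min(tau,n)} c_{t+1} | X_0 = x, A_0 = a ]
  = sum_{t<n} P(X_0,...,X_t in H, X_{t+1} in U | X_0 = x, A_0 = a),
  with H = X - (E u U), tau the hitting time of E u U.\<close>
definition exp_cost_trunc ::
  "real set \<Rightarrow> real set \<Rightarrow> real set \<Rightarrow> 'a set \<Rightarrow> (real \<Rightarrow> 'a \<Rightarrow> real \<Rightarrow> real)
     \<Rightarrow> (real \<Rightarrow> 'a \<Rightarrow> real) \<Rightarrow> real \<Rightarrow> 'a \<Rightarrow> nat \<Rightarrow> real" where
  "exp_cost_trunc X E U A Pt \<pi> x a n =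
     (let H = X - (E \<union> U) in
      \<Sum>t<n. if x \<in> H then
        (\<Sum>xs\<in>{xs. set xs \<subseteq> H \<times> A \<and> length xs = t}. \<Sum>z\<in>U. traj_prob Pt \<pi> x a xs z)
      else 0)"

definition exp_cost ::
  "real set \<Rightarrow> real set \<Rightarrow> real set \<Rightarrow> 'a set \<Rightarrow> (real \<Rightarrow> 'a \<Rightarrow> real \<Rightarrow> real)
     \<Rightarrow> (real \<Rightarrow> 'a \<Rightarrow> real) \<Rightarrow> real \<Rightarrow> 'a \<Rightarrow> real" where
  "exp_cost X E U A Pt \<pi> x a = (SUP n. exp_cost_trunc X E U A Pt \<pi> x a n)"

definition robustQ ::
  "real set \<Rightarrow> real set \<Rightarrow> real set \<Rightarrow> 'a set \<Rightarrow> real \<Rightarrow> (real \<Rightarrow> 'a \<Rightarrow> real \<Rightarrow> real)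
     \<Rightarrow> (real \<Rightarrow> 'a \<Rightarrow> real) \<Rightarrow> real \<Rightarrow> 'a \<Rightarrow> real" where
  "robustQ X E U A \<delta> P \<pi> x a =
     (SUP Pt\<in>ambiguity_set X (X - (E \<union> U)) A \<delta> P. exp_cost X E U A Pt \<pi> x a)"

end

theory Submission
  imports Defs
begin


lemma dist_sum_le:
  assumes "finite X" "is_dist X \<mu>" "\<And>l. l \<in> X \<Longrightarrow> v l \<le> c"
  shows "(\<Sum>l\<in>X. \<mu> l * v l) \<le> c"
proof -
  have "(\<Sum>l\<in>X. \<mu> l * v l) \<le> (\<Sum>l\<in>X. \<mu> l * c)"
    using assms by (intro sum_mono mult_left_mono) (auto simp: is_dist_def)
  also have "\<dots> = c" using assms(2) by (simp add: is_dist_def sum_distrib_right[symmetric])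
  finally show ?thesis .
qed

lemma dist_sum_ge:
  assumes "finite X" "is_dist X \<mu>" "\<And>l. l \<in> X \<Longrightarrow> c \<le> v l"
  shows "c \<le> (\<Sum>l\<in>X. \<mu> l * v l)"
proof -
  have "c = (\<Sum>l\<in>X. \<mu> l * c)" using assms(2) by (simp add: is_dist_def sum_distrib_right[symmetric])
  also have "\<dots> \<le> (\<Sum>l\<in>X. \<mu> l * v l)"
    using assms by (intro sum_mono mult_left_mono) (auto simp: is_dist_def)
  finally show ?thesis .
qed

lemma prod_coupling:
  assumes "finite X" "is_dist X \<mu>" "is_dist X \<nu>"
  shows "(\<lambda>q. \<mu> (fst q) * \<nu> (snd q)) \<in> couplings X \<mu> \<nu>"
  using assms by (auto simp: couplings_def is_dist_def sum_distrib_left[symmetric] sum_distrib_right[symmetric])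

lemma wass_le:
  assumes "\<Gamma> \<in> couplings X \<mu> \<nu>"
  shows "wasserstein X \<mu> \<nu> \<le> (\<Sum>q\<in>X \<times> X. \<Gamma> q * \<bar>fst q - snd q\<bar>)"
  unfolding wasserstein_def
  apply (rule cInf_lower) using assms
  by (auto intro!: bdd_belowI[where m=0] sum_nonneg simp: couplings_def)

lemma wass_approx:
  assumes "finite X" "is_dist X \<mu>" "is_dist X \<nu>" "wasserstein X \<mu> \<nu> < c"
  shows "\<exists>\<Gamma>\<in>couplings X \<mu> \<nu>. (\<Sum>q\<in>X \<times> X. \<Gamma> q * \<bar>fst q - snd q\<bar>) < c"
proof -
  have ne: "couplings X \<mu> \<nu> \<noteq> {}" using prod_coupling[OF assms(1-3)] by auto
  have bb: "bdd_below ((\<lambda>\<Gamma>. \<Sum>q\<in>X \<times> X. \<Gamma> q * \<bar>fst q - snd q\<bar>) ` couplings X \<mu> \<nu>)"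
    by (auto intro!: bdd_belowI[where m=0] sum_nonneg simp: couplings_def)
  show ?thesis using assms(4) unfolding wasserstein_def
    using cInf_less_iff[OF _ bb] ne by auto
qed

lemma diag_coupling:
  assumes "finite X" "is_dist X p"
  shows "wasserstein X p p \<le> 0"
proof -
  let ?G = "\<lambda>q. if fst q = snd q then p (fst q) else 0"
  have "?G \<in> couplings X p p" using assms
    by (auto simp: couplings_def is_dist_def sum.delta sum.delta')
  then have "wasserstein X p p \<le> (\<Sum>q\<in>X \<times> X. ?G q * \<bar>fst q - snd q\<bar>)" by (rule wass_le)
  also have "\<dots> = 0" by (intro sum.neutral) auto
  finally show ?thesis .
qed

lemma sum_prod_split:
  "(\<Sum>q\<in>A \<times> B. g q) = (\<Sum>l\<in>A. \<Sum>y\<in>B. g (l, y))"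
  by (simp add: sum.cartesian_product)

lemma weak_dual:
  fixes f :: "real \<Rightarrow> real"
  assumes X: "finite X" and mu: "is_dist X \<mu>" and p: "is_dist X p"
    and W: "wasserstein X \<mu> p \<le> \<delta>" and lam: "lam \<ge> 0"
    and h: "\<forall>y\<in>X. Max ((\<lambda>l. - lam * \<bar>l - y\<bar> + f l) ` X) \<le> h y"
  shows "(\<Sum>l\<in>X. \<mu> l * f l) \<le> lam * \<delta> + (\<Sum>y\<in>X. h y * p y)"
proof (rule field_le_epsilon)
  fix e :: real assume e: "e > 0"
  have ep: "e/(lam+1) > 0" using e lam by auto
  obtain \<Gamma> where G: "\<Gamma> \<in> couplings X \<mu> p"
    and c: "(\<Sum>q\<in>X \<times> X. \<Gamma> q * \<bar>fst q - snd q\<bar>) < \<delta> + e/(lam+1)"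
    using wass_approx[OF X mu p, of "\<delta> + e/(lam+1)"] W ep by auto
  have Gn: "\<And>l y. l \<in> X \<Longrightarrow> y \<in> X \<Longrightarrow> \<Gamma> (l, y) \<ge> 0" using G by (auto simp: couplings_def)
  have m1: "\<And>y. y \<in> X \<Longrightarrow> (\<Sum>l\<in>X. \<Gamma> (l, y)) = p y" using G by (auto simp: couplings_def)
  have m2: "\<And>l. l \<in> X \<Longrightarrow> (\<Sum>y\<in>X. \<Gamma> (l, y)) = \<mu> l" using G by (auto simp: couplings_def)
  have "(\<Sum>l\<in>X. \<mu> l * f l) = (\<Sum>l\<in>X. \<Sum>y\<in>X. \<Gamma>(l,y) * f l)"
    by (intro sum.cong refl) (simp add: m2 sum_distrib_right[symmetric])
  also have "\<dots> = (\<Sum>l\<in>X. \<Sum>y\<in>X. \<Gamma>(l,y) * (- lam * \<bar>l - y\<bar> + f l))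
      + lam * (\<Sum>l\<in>X. \<Sum>y\<in>X. \<Gamma>(l,y) * \<bar>l - y\<bar>)"
    by (simp add: sum_distrib_left algebra_simps sum.distrib sum_subtractf)
  also have "\<dots> \<le> (\<Sum>l\<in>X. \<Sum>y\<in>X. \<Gamma>(l,y) * h y) + lam * (\<delta> + e/(lam+1))"
  proof (rule add_mono)
    show "(\<Sum>l\<in>X. \<Sum>y\<in>X. \<Gamma>(l,y) * (- lam * \<bar>l - y\<bar> + f l)) \<le> (\<Sum>l\<in>X. \<Sum>y\<in>X. \<Gamma>(l,y) * h y)"
    proof (intro sum_mono mult_left_mono Gn)
      fix l y assume l: "l \<in> X" and y: "y \<in> X"
      have "- lam * \<bar>l - y\<bar> + f l \<le> Max ((\<lambda>l. - lam * \<bar>l - y\<bar> + f l) ` X)"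
        using X l by (intro Max_ge) auto
      also have "\<dots> \<le> h y" using h y by auto
      finally show "- lam * \<bar>l - y\<bar> + f l \<le> h y" .
    qed
    show "lam * (\<Sum>l\<in>X. \<Sum>y\<in>X. \<Gamma>(l,y) * \<bar>l - y\<bar>) \<le> lam * (\<delta> + e/(lam+1))"
      using c lam by (intro mult_left_mono) (auto simp: sum_prod_split)
  qed
  also have "(\<Sum>l\<in>X. \<Sum>y\<in>X. \<Gamma>(l,y) * h y) = (\<Sum>y\<in>X. h y * p y)"
  proof (subst sum.swap, intro sum.cong refl)
    fix y assume y: "y \<in> X"
    have "(\<Sum>l\<in>X. \<Gamma> (l, y) * h y) = (\<Sum>l\<in>X. \<Gamma> (l, y)) * h y" by (simp add: sum_distrib_right)
    then show "(\<Sum>l\<in>X. \<Gamma> (l, y) * h y) = h y * p y" using m1[OF y] by simp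
  qed
  also have "lam * (\<delta> + e/(lam+1)) \<le> lam * \<delta> + e"
  proof -
    have "lam * (e/(lam+1)) \<le> e" using lam e by (simp add: field_simps)
    then show ?thesis by (simp add: algebra_simps)
  qed
  finally show "(\<Sum>l\<in>X. \<mu> l * f l) \<le> lam * \<delta> + (\<Sum>y\<in>X. h y * p y) + e" by simp
qed




lemma finite_uniform_pos:
  fixes R :: "'b \<Rightarrow> real \<Rightarrow> bool"
  assumes "finite S" "\<And>s. s \<in> S \<Longrightarrow> \<exists>\<tau>>0. \<forall>t. 0 < t \<and> t \<le> \<tau> \<longrightarrow> R s t"
  shows "\<exists>\<tau>>0. \<forall>s\<in>S. \<forall>t. 0 < t \<and> t \<le> \<tau> \<longrightarrow> R s t"
proof -
  from assms(2) obtain tf where tf: "\<And>s. s \<in> S \<Longrightarrow> tf s > 0 \<and> (\<forall>t. 0 < t \<and> t \<le> tf s \<longrightarrow> R s t)"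
    by metis
  let ?t = "Min (insert 1 (tf ` S))"
  have "?t > 0" using assms(1) tf by (subst Min_gr_iff) auto
  moreover have "\<forall>s\<in>S. \<forall>t. 0 < t \<and> t \<le> ?t \<longrightarrow> R s t"
  proof (intro ballI allI impI)
    fix s t assume s: "s \<in> S" and t: "0 < t \<and> t \<le> ?t"
    have "?t \<le> tf s" using assms(1) s by (intro Min_le) auto
    then show "R s t" using tf[OF s] t by auto
  qed
  ultimately show ?thesis by blast
qed

locale wdual =
  fixes X :: "real set" and p f :: "real \<Rightarrow> real" and \<delta> :: real
  assumes finX: "finite X" and pd: "is_dist X p" and dl: "\<delta> \<ge> 0"
begin

lemma Xne: "X \<noteq> {}" using pd by (auto simp: is_dist_def)
lemma pnn: "y \<in> X \<Longrightarrow> p y \<ge> 0" using pd by (auto simp: is_dist_def)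
lemma psum: "(\<Sum>y\<in>X. p y) = 1" using pd by (auto simp: is_dist_def)

definition val where "val lam y l = - lam * \<bar>l - y\<bar> + f l"
definition mm where "mm lam y = Max (val lam y ` X)"
definition g where "g lam = lam * \<delta> + (\<Sum>y\<in>X. mm lam y * p y)"
definition Lset where "Lset lam y = {l\<in>X. val lam y l = mm lam y}"
definition dmin where "dmin lam y = Min ((\<lambda>l. \<bar>l - y\<bar>) ` Lset lam y)"
definition dmax where "dmax lam y = Max ((\<lambda>l. \<bar>l - y\<bar>) ` Lset lam y)"
definition K where "K = Max ((\<lambda>q. \<bar>fst q - snd q\<bar>) ` (X \<times> X))"

lemma val_le_mm: "l \<in> X \<Longrightarrow> val lam y l \<le> mm lam y"
  unfolding mm_def using finX by auto

lemma mm_in: "\<exists>l\<in>X. val lam y l = mm lam y"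
proof -
  have "mm lam y \<in> val lam y ` X" unfolding mm_def using finX Xne by (intro Max_in) auto
  then show ?thesis by auto
qed

lemma Lset_ne: "Lset lam y \<noteq> {}" using mm_in by (auto simp: Lset_def)
lemma Lset_fin: "finite (Lset lam y)" using finX by (auto simp: Lset_def)
lemma Lset_sub: "Lset lam y \<subseteq> X" by (auto simp: Lset_def)

lemma dmin_ex: "\<exists>l\<in>Lset lam y. \<bar>l - y\<bar> = dmin lam y"
proof -
  have "dmin lam y \<in> (\<lambda>l. \<bar>l - y\<bar>) ` Lset lam y" unfolding dmin_def
    using Lset_ne Lset_fin by (intro Min_in) auto
  then show ?thesis by auto
qed
lemma dmax_ex: "\<exists>l\<in>Lset lam y. \<bar>l - y\<bar> = dmax lam y"
proof -
  have "dmax lam y \<in> (\<lambda>l. \<bar>l - y\<bar>) ` Lset lam y" unfolding dmax_def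
    using Lset_ne Lset_fin by (intro Max_in) auto
  then show ?thesis by auto
qed
lemma dmin_le: "l \<in> Lset lam y \<Longrightarrow> dmin lam y \<le> \<bar>l - y\<bar>"
  unfolding dmin_def using Lset_fin by auto
lemma dmax_ge: "l \<in> Lset lam y \<Longrightarrow> \<bar>l - y\<bar> \<le> dmax lam y"
  unfolding dmax_def using Lset_fin by auto

lemma K_ge: "l \<in> X \<Longrightarrow> y \<in> X \<Longrightarrow> \<bar>l - y\<bar> \<le> K"
  unfolding K_def using finX by (intro Max_ge) force+

lemma K_nn: "K \<ge> 0"
proof -
  obtain y where "y \<in> X" using Xne by auto
  then show ?thesis using K_ge[of y y] by simp
qed

lemma dmin_K: "y \<in> X \<Longrightarrow> dmin lam y \<le> K"
  using dmin_ex[of lam y] Lset_sub K_ge by force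
lemma dmax_K: "y \<in> X \<Longrightarrow> dmax lam y \<le> K"
  using dmax_ex[of lam y] Lset_sub K_ge by force
lemma dmin_nn: "dmin lam y \<ge> 0"
  using dmin_ex[of lam y] by force

lemma local_lin_y:
  assumes y: "y \<in> X"
  shows "\<exists>\<tau>>0. \<forall>t. 0 < t \<and> t \<le> \<tau> \<longrightarrow>
     mm (lam + t) y = mm lam y - t * dmin lam y \<and> mm (lam - t) y = mm lam y + t * dmax lam y"
proof -
  let ?N = "X - Lset lam y"
  have "\<exists>\<tau>>0. \<forall>l\<in>?N. \<forall>t. 0 < t \<and> t \<le> \<tau> \<longrightarrow> val lam y l + t * K + t \<le> mm lam y"
  proof (rule finite_uniform_pos)
    show "finite ?N" using finX by auto
  next
    fix l assume l: "l \<in> ?N"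
    then have lt: "val lam y l < mm lam y" using val_le_mm[of l lam y] by (auto simp: Lset_def)
    let ?tau = "(mm lam y - val lam y l) / (K + 1)"
    have Kp: "K + 1 > 0" using K_nn by auto
    have "?tau > 0" using lt Kp by auto
    moreover have "\<forall>t. 0 < t \<and> t \<le> ?tau \<longrightarrow> val lam y l + t * K + t \<le> mm lam y"
    proof (intro allI impI)
      fix t assume t: "0 < t \<and> t \<le> ?tau"
      then have "t * (K + 1) \<le> mm lam y - val lam y l" using Kp by (simp add: pos_le_divide_eq)
      then show "val lam y l + t * K + t \<le> mm lam y" by (simp add: algebra_simps)
    qed
    ultimately show "\<exists>\<tau>>0. \<forall>t. 0 < t \<and> t \<le> \<tau> \<longrightarrow> val lam y l + t * K + t \<le> mm lam y" by blast
  qed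
  then obtain \<tau> where tp: "\<tau> > 0" and tau: "\<And>l t. l \<in> ?N \<Longrightarrow> 0 < t \<Longrightarrow> t \<le> \<tau> \<Longrightarrow> val lam y l + t * K + t \<le> mm lam y"
    by blast
  have "\<forall>t. 0 < t \<and> t \<le> \<tau> \<longrightarrow>
     mm (lam + t) y = mm lam y - t * dmin lam y \<and> mm (lam - t) y = mm lam y + t * dmax lam y"
  proof (intro allI impI conjI)
    fix t assume t: "0 < t \<and> t \<le> \<tau>"
    obtain l1 where l1: "l1 \<in> Lset lam y" "\<bar>l1 - y\<bar> = dmin lam y" using dmin_ex by blast
    show "mm (lam + t) y = mm lam y - t * dmin lam y" unfolding mm_def
    proof (rule Max_eqI)
      show "finite (val (lam + t) y ` X)" using finX by auto
    next
      fix v assume "v \<in> val (lam + t) y ` X"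
      then obtain l where l: "l \<in> X" and v: "v = val (lam + t) y l" by auto
      have vv: "v = val lam y l - t * \<bar>l - y\<bar>" unfolding v val_def by (simp add: algebra_simps)
      show "v \<le> Max (val lam y ` X) - t * dmin lam y"
      proof (cases "l \<in> Lset lam y")
        case True
        then have "val lam y l = Max (val lam y ` X)" by (simp add: Lset_def mm_def)
        moreover have "t * dmin lam y \<le> t * \<bar>l - y\<bar>" using dmin_le[OF True] t by (intro mult_left_mono) auto
        ultimately show ?thesis using vv by linarith
      next
        case False
        then have "val lam y l + t * K + t \<le> mm lam y" using tau[of l t] l t by auto
        moreover have "t * dmin lam y \<le> t * K" using dmin_K[OF y] t by (intro mult_left_mono) auto
        moreover have "0 \<le> t * \<bar>l - y\<bar>" using t by auto
        ultimately show ?thesis using vv t unfolding mm_def by linarith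
      qed
    next
      have "val (lam + t) y l1 = mm lam y - t * dmin lam y"
        using l1 unfolding Lset_def val_def by (auto simp: algebra_simps)
      then show "Max (val lam y ` X) - t * dmin lam y \<in> val (lam + t) y ` X"
        using l1 Lset_sub unfolding mm_def by (metis image_eqI subsetD)
    qed
  next
    fix t assume t: "0 < t \<and> t \<le> \<tau>"
    obtain l2 where l2: "l2 \<in> Lset lam y" "\<bar>l2 - y\<bar> = dmax lam y" using dmax_ex by blast
    show "mm (lam - t) y = mm lam y + t * dmax lam y" unfolding mm_def
    proof (rule Max_eqI)
      show "finite (val (lam - t) y ` X)" using finX by auto
    next
      fix v assume "v \<in> val (lam - t) y ` X"
      then obtain l where l: "l \<in> X" and v: "v = val (lam - t) y l" by auto
      have vv: "v = val lam y l + t * \<bar>l - y\<bar>" unfolding v val_def by (simp add: algebra_simps)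
      show "v \<le> Max (val lam y ` X) + t * dmax lam y"
      proof (cases "l \<in> Lset lam y")
        case True
        then have "val lam y l = Max (val lam y ` X)" by (simp add: Lset_def mm_def)
        moreover have "t * \<bar>l - y\<bar> \<le> t * dmax lam y" using dmax_ge[OF True] t by (intro mult_left_mono) auto
        ultimately show ?thesis using vv by linarith
      next
        case False
        then have "val lam y l + t * K + t \<le> mm lam y" using tau[of l t] l t by auto
        moreover have "t * \<bar>l - y\<bar> \<le> t * K" using K_ge[OF l y] t by (intro mult_left_mono) auto
        moreover have "0 \<le> t * dmax lam y" using t dmax_ex[of lam y] by force
        ultimately show ?thesis using vv t unfolding mm_def by linarith
      qed
    next
      have "val (lam - t) y l2 = mm lam y + t * dmax lam y"
        using l2 unfolding Lset_def val_def by (auto simp: algebra_simps)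
      then show "Max (val lam y ` X) + t * dmax lam y \<in> val (lam - t) y ` X"
        using l2 Lset_sub unfolding mm_def by (metis image_eqI subsetD)
    qed
  qed
  then show ?thesis using tp by blast
qed

end



context wdual begin

definition aa where "aa lam = (\<Sum>y\<in>X. dmin lam y * p y)"
definition bb where "bb lam = (\<Sum>y\<in>X. dmax lam y * p y)"

lemma local_lin:
  "\<exists>\<tau>>0. \<forall>t. 0 < t \<and> t \<le> \<tau> \<longrightarrow>
     g (lam + t) = g lam + t * (\<delta> - aa lam) \<and> g (lam - t) = g lam - t * (\<delta> - bb lam)"
proof -
  have "\<exists>\<tau>>0. \<forall>y\<in>X. \<forall>t. 0 < t \<and> t \<le> \<tau> \<longrightarrow>
     mm (lam + t) y = mm lam y - t * dmin lam y \<and> mm (lam - t) y = mm lam y + t * dmax lam y"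
    by (rule finite_uniform_pos[OF finX], rule local_lin_y)
  then obtain \<tau> where tp: "\<tau> > 0" and tau: "\<forall>y\<in>X. \<forall>t. 0 < t \<and> t \<le> \<tau> \<longrightarrow>
     mm (lam + t) y = mm lam y - t * dmin lam y \<and> mm (lam - t) y = mm lam y + t * dmax lam y"
    by blast
  have "\<forall>t. 0 < t \<and> t \<le> \<tau> \<longrightarrow>
     g (lam + t) = g lam + t * (\<delta> - aa lam) \<and> g (lam - t) = g lam - t * (\<delta> - bb lam)"
  proof (intro allI impI conjI)
    fix t assume t: "0 < t \<and> t \<le> \<tau>"
    have "(\<Sum>y\<in>X. mm (lam + t) y * p y) = (\<Sum>y\<in>X. mm lam y * p y - t * (dmin lam y * p y))"
    proof (intro sum.cong refl)
      fix y assume "y \<in> X"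
      then have h: "mm (lam + t) y = mm lam y - t * dmin lam y" using tau t by blast
      show "mm (lam + t) y * p y = mm lam y * p y - t * (dmin lam y * p y)" unfolding h by (simp add: algebra_simps)
    qed
    then show "g (lam + t) = g lam + t * (\<delta> - aa lam)"
      unfolding g_def aa_def by (simp add: sum_subtractf sum_distrib_left algebra_simps)
    have "(\<Sum>y\<in>X. mm (lam - t) y * p y) = (\<Sum>y\<in>X. mm lam y * p y + t * (dmax lam y * p y))"
    proof (intro sum.cong refl)
      fix y assume "y \<in> X"
      then have h: "mm (lam - t) y = mm lam y + t * dmax lam y" using tau t by blast
      show "mm (lam - t) y * p y = mm lam y * p y + t * (dmax lam y * p y)" unfolding h by (simp add: algebra_simps)
    qed
    then show "g (lam - t) = g lam - t * (\<delta> - bb lam)"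
      unfolding g_def bb_def by (simp add: sum.distrib sum_distrib_left algebra_simps)
  qed
  then show ?thesis using tp by blast
qed

lemma mm_lip: "\<bar>mm lam y - mm lam' y\<bar> \<le> K * \<bar>lam - lam'\<bar>" if y: "y \<in> X" for lam lam'
proof -
  have a: "mm l1 y - mm l2 y \<le> K * \<bar>l1 - l2\<bar>" for l1 l2
  proof -
    obtain l where l: "l \<in> X" "val l1 y l = mm l1 y" using mm_in by blast
    have "mm l1 y = val l2 y l + (l2 - l1) * \<bar>l - y\<bar>" using l(2) unfolding val_def by (simp add: algebra_simps)
    also have "\<dots> \<le> mm l2 y + \<bar>l1 - l2\<bar> * K"
    proof (rule add_mono)
      show "val l2 y l \<le> mm l2 y" using val_le_mm[OF l(1)] .
      have "(l2 - l1) * \<bar>l - y\<bar> \<le> \<bar>l1 - l2\<bar> * \<bar>l - y\<bar>" by (intro mult_right_mono) auto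
      also have "\<dots> \<le> \<bar>l1 - l2\<bar> * K" using K_ge[OF l(1) y] by (intro mult_left_mono) auto
      finally show "(l2 - l1) * \<bar>l - y\<bar> \<le> \<bar>l1 - l2\<bar> * K" .
    qed
    finally show ?thesis by (simp add: algebra_simps)
  qed
  from a[of lam lam'] a[of lam' lam] show ?thesis by (simp add: abs_minus_commute abs_le_iff)
qed

lemma g_lip: "\<bar>g lam - g lam'\<bar> \<le> (\<delta> + K) * \<bar>lam - lam'\<bar>"
proof -
  have "g lam - g lam' = (lam - lam') * \<delta> + (\<Sum>y\<in>X. (mm lam y - mm lam' y) * p y)"
    unfolding g_def by (simp add: algebra_simps sum_subtractf)
  also have "\<bar>\<dots>\<bar> \<le> \<bar>lam - lam'\<bar> * \<delta> + (\<Sum>y\<in>X. K * \<bar>lam - lam'\<bar> * p y)"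
  proof -
    have "\<bar>(\<Sum>y\<in>X. (mm lam y - mm lam' y) * p y)\<bar> \<le> (\<Sum>y\<in>X. \<bar>(mm lam y - mm lam' y) * p y\<bar>)"
      by (rule sum_abs)
    also have "\<dots> \<le> (\<Sum>y\<in>X. K * \<bar>lam - lam'\<bar> * p y)"
    proof (intro sum_mono)
      fix y assume y: "y \<in> X"
      show "\<bar>(mm lam y - mm lam' y) * p y\<bar> \<le> K * \<bar>lam - lam'\<bar> * p y"
        using mm_lip[OF y, of lam lam'] pnn[OF y] by (simp add: abs_mult mult_right_mono)
    qed
    finally show ?thesis using dl by (simp add: abs_mult abs_triangle_ineq order_trans[OF abs_triangle_ineq])
  qed
  also have "\<dots> = (\<delta> + K) * \<bar>lam - lam'\<bar>"
  proof -
    have "(\<Sum>y\<in>X. K * \<bar>lam - lam'\<bar> * p y) = K * \<bar>lam - lam'\<bar> * (\<Sum>y\<in>X. p y)"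
      by (rule sum_distrib_left[symmetric])
    then show ?thesis by (simp add: psum algebra_simps)
  qed
  finally show ?thesis .
qed

definition Lam where "Lam = Max ((\<lambda>q. (f (fst q) - f (snd q)) / \<bar>fst q - snd q\<bar>) ` (X \<times> X))"

lemma Lam_nn: "Lam \<ge> 0"
proof -
  obtain y where y: "y \<in> X" using Xne by auto
  have "(f (fst (y,y)) - f (snd (y,y))) / \<bar>fst (y,y) - snd (y,y)\<bar> \<le> Lam"
    unfolding Lam_def using finX y by (intro Max_ge) (auto intro!: image_eqI[where x="(y,y)"])
  then show ?thesis by simp
qed

lemma mm_large: assumes y: "y \<in> X" and lam: "lam \<ge> Lam" shows "mm lam y = f y"
  unfolding mm_def
proof (rule Max_eqI)
  show "finite (val lam y ` X)" using finX by auto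
  show "f y \<in> val lam y ` X" using y by (auto simp: val_def intro!: image_eqI[where x=y])
  fix v assume "v \<in> val lam y ` X"
  then obtain l where l: "l \<in> X" and v: "v = val lam y l" by auto
  show "v \<le> f y"
  proof (cases "l = y")
    case True then show ?thesis using v by (simp add: val_def)
  next
    case False
    then have pos: "\<bar>l - y\<bar> > 0" by auto
    have "(f (fst (l,y)) - f (snd (l,y))) / \<bar>fst (l,y) - snd (l,y)\<bar> \<le> Lam"
      unfolding Lam_def using finX y l by (intro Max_ge) (auto intro!: image_eqI[where x="(l,y)"])
    then have "(f l - f y) / \<bar>l - y\<bar> \<le> lam" using lam by simp
    then have "f l - f y \<le> lam * \<bar>l - y\<bar>" using pos by (simp add: pos_divide_le_eq)
    then show ?thesis using v by (simp add: val_def)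
  qed
qed

lemma g_min_exists: "\<exists>lam\<ge>0. \<forall>lam'\<ge>0. g lam \<le> g lam'"
proof -
  have "continuous_on {0..Lam} g"
  proof (rule lipschitz_on_continuous_on)
    show "(\<delta> + K)-lipschitz_on {0..Lam} g"
      unfolding lipschitz_on_def using dl K_nn g_lip by (auto simp: dist_real_def)
  qed
  then obtain l0 where l0: "l0 \<in> {0..Lam}" "\<forall>l\<in>{0..Lam}. g l0 \<le> g l"
    using continuous_attains_inf[of "{0..Lam}" g] Lam_nn by auto
  have "g l0 \<le> g l" if l: "l \<ge> 0" for l
  proof (cases "l \<le> Lam")
    case True then show ?thesis using l0 l by auto
  next
    case False
    have "g l = l * \<delta> + (\<Sum>y\<in>X. f y * p y)" unfolding g_def using mm_large False
      by (intro arg_cong2[where f="(+)"] refl sum.cong) auto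
    moreover have "g Lam = Lam * \<delta> + (\<Sum>y\<in>X. f y * p y)" unfolding g_def using mm_large
      by (intro arg_cong2[where f="(+)"] refl sum.cong) auto
    moreover have "Lam * \<delta> \<le> l * \<delta>" using False dl by (intro mult_right_mono) auto
    moreover have "g l0 \<le> g Lam" using l0 Lam_nn by auto
    ultimately show ?thesis by linarith
  qed
  then show ?thesis using l0 by auto
qed

end



context wdual begin

lemma opt_conds: "\<exists>lam\<ge>0. aa lam \<le> \<delta> \<and> (lam > 0 \<longrightarrow> \<delta> \<le> bb lam)"
proof -
  obtain lam where lam: "lam \<ge> 0" "\<forall>lam'\<ge>0. g lam \<le> g lam'" using g_min_exists by blast
  obtain \<tau> where tp: "\<tau>>0" and tau: "\<forall>t. 0<t \<and> t\<le>\<tau> \<longrightarrow> g(lam+t) = g lam + t*(\<delta> - aa lam) \<and> g(lam-t) = g lam - t*(\<delta> - bb lam)"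
    using local_lin by blast
  have "aa lam \<le> \<delta>"
  proof -
    have "g lam \<le> g (lam + \<tau>)" using lam tp by auto
    also have "\<dots> = g lam + \<tau> * (\<delta> - aa lam)" using tau tp by auto
    finally have "0 \<le> \<tau>*(\<delta> - aa lam)" by simp
    then show ?thesis using tp by (simp add: zero_le_mult_iff)
  qed
  moreover have "\<delta> \<le> bb lam" if lp: "lam > 0"
  proof -
    let ?t = "min \<tau> lam"
    have t: "0 < ?t" "?t \<le> \<tau>" "lam - ?t \<ge> 0" using tp lp by auto
    have "g lam \<le> g (lam - ?t)" using lam t by auto
    also have "\<dots> = g lam - ?t * (\<delta> - bb lam)" using tau t by blast
    finally have "?t * (\<delta> - bb lam) \<le> 0" by simp
    then show ?thesis using t by (simp add: mult_le_0_iff)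
  qed
  ultimately show ?thesis using lam by blast
qed

lemma strong_dual:
  "\<exists>\<mu> lam. is_dist X \<mu> \<and> wasserstein X \<mu> p \<le> \<delta> \<and> lam \<ge> 0 \<and> (\<Sum>l\<in>X. \<mu> l * f l) = g lam"
proof -
  obtain lam where lam: "lam \<ge> 0" "aa lam \<le> \<delta>" "lam > 0 \<longrightarrow> \<delta> \<le> bb lam" using opt_conds by blast
  obtain \<theta> where th: "0 \<le> \<theta>" "\<theta> \<le> 1" "\<theta> * aa lam + (1-\<theta>) * bb lam \<le> \<delta>"
     "lam * (\<theta> * aa lam + (1-\<theta>) * bb lam) = lam * \<delta>"
  proof (cases "lam = 0 \<or> aa lam = bb lam")
    case True then show ?thesis using that[of 1] lam by auto
  next
    case False
    then have ab: "aa lam < bb lam" "\<delta> \<le> bb lam" using lam by auto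
    define th where "th = (bb lam - \<delta>)/(bb lam - aa lam)"
    have h: "th * (bb lam - aa lam) = bb lam - \<delta>" using ab by (simp add: th_def)
    have e0: "th * aa lam + (1 - th) * bb lam = bb lam - th * (bb lam - aa lam)" by (simp add: algebra_simps)
    have e: "th * aa lam + (1 - th) * bb lam = \<delta>" unfolding e0 h by simp
    have t01: "0 \<le> th" "th \<le> 1" using ab lam unfolding th_def by (auto simp: field_simps)
    show ?thesis apply (rule that[of th]) using t01 e by auto
  qed
  define l1 where "l1 = (\<lambda>y. SOME l. l \<in> Lset lam y \<and> \<bar>l - y\<bar> = dmin lam y)"
  define l2 where "l2 = (\<lambda>y. SOME l. l \<in> Lset lam y \<and> \<bar>l - y\<bar> = dmax lam y)"
  have l1: "l1 y \<in> Lset lam y \<and> \<bar>l1 y - y\<bar> = dmin lam y" for y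
    unfolding l1_def using dmin_ex[of lam y] by (rule someI_ex[OF bexE]) auto
  have l2: "l2 y \<in> Lset lam y \<and> \<bar>l2 y - y\<bar> = dmax lam y" for y
    unfolding l2_def using dmax_ex[of lam y] by (rule someI_ex[OF bexE]) auto
  have l1X: "l1 y \<in> X" for y using l1[of y] Lset_sub by auto
  have l2X: "l2 y \<in> X" for y using l2[of y] Lset_sub by auto
  define G where "G = (\<lambda>q. p (snd q) * ((if fst q = l1 (snd q) then \<theta> else 0) + (if fst q = l2 (snd q) then 1 - \<theta> else 0)))"
  define \<mu> where "\<mu> = (\<lambda>l. if l \<in> X then (\<Sum>y\<in>X. G (l, y)) else 0)"
  have Gnn: "q \<in> X \<times> X \<Longrightarrow> G q \<ge> 0" for q using th pnn unfolding G_def by auto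
  have Gsum: "(\<Sum>l\<in>X. G (l, y) * \<phi> l) = p y * (\<theta> * \<phi> (l1 y) + (1 - \<theta>) * \<phi> (l2 y))" for y \<phi>
  proof -
    have "(\<Sum>l\<in>X. G (l, y) * \<phi> l) = (\<Sum>l\<in>X. (if l = l1 y then p y * \<theta> * \<phi> l else 0) + (if l = l2 y then p y * (1 - \<theta>) * \<phi> l else 0))"
      unfolding G_def by (intro sum.cong refl) (auto simp: algebra_simps)
    also have "\<dots> = p y * \<theta> * \<phi> (l1 y) + p y * (1 - \<theta>) * \<phi> (l2 y)"
      using l1X l2X finX by (simp add: sum.distrib sum.delta)
    finally show ?thesis by (simp add: algebra_simps)
  qed
  have col: "(\<Sum>l\<in>X. G (l, y)) = p y" for y using Gsum[of y "\<lambda>_. 1"] by (simp add: algebra_simps)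
  have coup: "G \<in> couplings X \<mu> p" unfolding couplings_def using Gnn col by (auto simp: \<mu>_def)
  have mud: "is_dist X \<mu>"
  proof -
    have "(\<Sum>l\<in>X. \<mu> l) = (\<Sum>l\<in>X. \<Sum>y\<in>X. G (l, y))" by (auto simp: \<mu>_def)
    also have "\<dots> = (\<Sum>y\<in>X. p y)" by (subst sum.swap) (simp add: col)
    finally show ?thesis using psum Gnn by (auto simp: is_dist_def \<mu>_def intro!: sum_nonneg)
  qed
  have cost: "(\<Sum>q\<in>X \<times> X. G q * \<bar>fst q - snd q\<bar>) = \<theta> * aa lam + (1-\<theta>) * bb lam"
  proof -
    have "(\<Sum>q\<in>X \<times> X. G q * \<bar>fst q - snd q\<bar>) = (\<Sum>l\<in>X. \<Sum>y\<in>X. G (l, y) * \<bar>l - y\<bar>)"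
      by (simp add: sum_prod_split)
    also have "\<dots> = (\<Sum>y\<in>X. \<Sum>l\<in>X. G (l, y) * \<bar>l - y\<bar>)" by (rule sum.swap)
    also have "\<dots> = (\<Sum>y\<in>X. p y * (\<theta> * dmin lam y + (1 - \<theta>) * dmax lam y))"
      using Gsum l1 l2 by (intro sum.cong refl) auto
    also have "\<dots> = (\<Sum>y\<in>X. \<theta> * (dmin lam y * p y) + (1-\<theta>) * (dmax lam y * p y))"
      by (intro sum.cong refl) (simp add: algebra_simps)
    also have "\<dots> = \<theta> * aa lam + (1-\<theta>) * bb lam"
      unfolding aa_def bb_def by (simp add: sum.distrib sum_distrib_left)
    finally show ?thesis .
  qed
  have W: "wasserstein X \<mu> p \<le> \<delta>" using wass_le[OF coup] cost th by simp
  have fl: "f (l1 y) = mm lam y + lam * dmin lam y" "f (l2 y) = mm lam y + lam * dmax lam y" for y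
    using l1[of y] l2[of y] by (auto simp: Lset_def val_def algebra_simps)
  have "(\<Sum>l\<in>X. \<mu> l * f l) = (\<Sum>l\<in>X. \<Sum>y\<in>X. G (l, y) * f l)"
    by (auto simp: \<mu>_def sum_distrib_right intro!: sum.cong)
  also have "\<dots> = (\<Sum>y\<in>X. \<Sum>l\<in>X. G (l, y) * f l)" by (rule sum.swap)
  also have "\<dots> = (\<Sum>y\<in>X. mm lam y * p y + lam * (p y * (\<theta> * dmin lam y + (1 - \<theta>) * dmax lam y)))"
  proof (intro sum.cong refl)
    fix y assume "y \<in> X"
    show "(\<Sum>l\<in>X. G (l, y) * f l) = mm lam y * p y + lam * (p y * (\<theta> * dmin lam y + (1 - \<theta>) * dmax lam y))"
      unfolding Gsum fl by (simp add: algebra_simps)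
  qed
  also have "\<dots> = (\<Sum>y\<in>X. mm lam y * p y + lam * (\<theta> * (dmin lam y * p y) + (1-\<theta>) * (dmax lam y * p y)))"
    by (intro sum.cong refl) (simp add: algebra_simps)
  also have "\<dots> = (\<Sum>y\<in>X. mm lam y * p y) + lam * (\<theta> * aa lam + (1-\<theta>) * bb lam)"
  proof -
    have sB: "(\<Sum>y\<in>X. \<theta> * (dmin lam y * p y) + (1-\<theta>) * (dmax lam y * p y)) = \<theta> * aa lam + (1-\<theta>) * bb lam"
      unfolding aa_def bb_def by (simp add: sum.distrib sum_distrib_left)
    show ?thesis
      by (simp only: sum.distrib[of "\<lambda>y. mm lam y * p y"] sum_distrib_left[symmetric] sB)
  qed
  also have "\<dots> = g lam" using th by (simp add: g_def)
  finally show ?thesis using mud W lam by blast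
qed

lemma duality:
  "(SUP \<mu>\<in>{\<mu>. is_dist X \<mu> \<and> wasserstein X \<mu> p \<le> \<delta>}. \<Sum>l\<in>X. \<mu> l * f l) =
   Inf {lam * \<delta> + (\<Sum>y\<in>X. h y * p y) | lam h. lam \<ge> 0 \<and>
          (\<forall>y\<in>X. Max ((\<lambda>l. - lam * \<bar>l - y\<bar> + f l) ` X) \<le> h y)}"
  (is "Sup (?F ` ?B) = Inf ?D")
proof -
  obtain \<mu>0 lam0 where m0: "is_dist X \<mu>0" "wasserstein X \<mu>0 p \<le> \<delta>" "lam0 \<ge> 0"
    "(\<Sum>l\<in>X. \<mu>0 l * f l) = g lam0" using strong_dual by blast
  have gD: "g lam0 \<in> ?D"
    using m0(3) unfolding g_def by (auto simp: mm_def val_def intro!: exI[of _ "mm lam0"])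
  have WD: "?F \<mu> \<le> d" if "\<mu> \<in> ?B" "d \<in> ?D" for \<mu> d
    using that weak_dual[OF finX _ pd] by blast
  have Bne: "?B \<noteq> {}" using m0 by auto
  have Dne: "?D \<noteq> {}" using gD by auto
  have le1: "Sup (?F ` ?B) \<le> Inf ?D"
    using Bne Dne WD by (intro cSUP_least cInf_greatest) auto
  have bdb: "bdd_below ?D"
  proof (rule bdd_belowI[where m="?F \<mu>0"])
    fix d assume "d \<in> ?D" then show "?F \<mu>0 \<le> d" using WD[of \<mu>0 d] m0(1,2) by blast
  qed
  have bda: "bdd_above (?F ` ?B)"
  proof (rule bdd_aboveI[where M="g lam0"])
    fix v assume "v \<in> ?F ` ?B" then show "v \<le> g lam0" using WD gD by blast
  qed
  have "Inf ?D \<le> g lam0" using gD bdb by (rule cInf_lower)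
  also have "\<dots> \<le> Sup (?F ` ?B)" using m0 bda by (metis (mono_tags, lifting) cSUP_upper mem_Collect_eq)
  finally show ?thesis using le1 by simp
qed

end



locale rmdp =
  fixes X E U :: "real set" and A :: "'a set" and \<delta> :: real
    and P :: "real \<Rightarrow> 'a \<Rightarrow> real \<Rightarrow> real" and \<pi> :: "real \<Rightarrow> 'a \<Rightarrow> real"
  assumes finX: "finite X" and finA: "finite A"
    and EX: "E \<subseteq> X" and UX: "U \<subseteq> X" and EU: "E \<inter> U = {}"
    and dl: "\<delta> \<ge> 0"
    and Pd: "\<And>y b. y \<in> X - (E \<union> U) \<Longrightarrow> b \<in> A \<Longrightarrow> is_dist X (P y b)"
    and pid: "\<And>y. y \<in> X \<Longrightarrow> is_dist A (\<pi> y)"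
begin

abbreviation "H \<equiv> X - (E \<union> U)"
definition ball :: "real \<Rightarrow> 'a \<Rightarrow> (real \<Rightarrow> real) set" where "ball y b = {\<mu>. is_dist X \<mu> \<and> wasserstein X \<mu> (P y b) \<le> \<delta>}"
definition fw :: "(real \<Rightarrow> 'a \<Rightarrow> real) \<Rightarrow> real \<Rightarrow> real" where "fw w l = cost U l + (if l \<in> H then (\<Sum>b\<in>A. w l b * \<pi> l b) else 0)"
definition T :: "(real \<Rightarrow> 'a \<Rightarrow> real) \<Rightarrow> real \<Rightarrow> 'a \<Rightarrow> real" where "T w y b = (SUP \<mu>\<in>ball y b. \<Sum>l\<in>X. \<mu> l * fw w l)"
definition good :: "(real \<Rightarrow> 'a \<Rightarrow> real \<Rightarrow> real) \<Rightarrow> bool" where "good Pt \<longleftrightarrow> (\<forall>y\<in>H. \<forall>b\<in>A. is_dist X (Pt y b))"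
abbreviation "Amb \<equiv> ambiguity_set X H A \<delta> P"
abbreviation "Ec Pt n y b \<equiv> exp_cost_trunc X E U A Pt \<pi> y b n"
abbreviation "Q \<equiv> robustQ X E U A \<delta> P \<pi>"

lemma finH: "finite H" using finX by auto
lemma pinn: "l \<in> X \<Longrightarrow> b \<in> A \<Longrightarrow> \<pi> l b \<ge> 0" using pid by (auto simp: is_dist_def)
lemma pisum: "l \<in> X \<Longrightarrow> (\<Sum>b\<in>A. \<pi> l b) = 1" using pid by (auto simp: is_dist_def)
lemma cost_H: "l \<in> H \<Longrightarrow> cost U l = 0" by (auto simp: cost_def)
lemma cost01: "0 \<le> cost U l" "cost U l \<le> 1" by (auto simp: cost_def)

lemma ball_ne: "y \<in> H \<Longrightarrow> b \<in> A \<Longrightarrow> P y b \<in> ball y b"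
  using Pd diag_coupling[OF finX] dl by (fastforce simp: ball_def)
lemma Amb_good: "Pt \<in> Amb \<Longrightarrow> good Pt" by (auto simp: ambiguity_set_def good_def)
lemma Amb_ball: "Pt \<in> Amb \<Longrightarrow> y \<in> H \<Longrightarrow> b \<in> A \<Longrightarrow> Pt y b \<in> ball y b"
  by (auto simp: ambiguity_set_def ball_def)
lemma ball_dist: "\<mu> \<in> ball y b \<Longrightarrow> is_dist X \<mu>" by (auto simp: ball_def)
lemma P_Amb: "P \<in> Amb" using ball_ne by (auto simp: ambiguity_set_def ball_def)
lemma Amb_ne: "Amb \<noteq> {}" using P_Amb by auto

lemma fw_le: assumes "\<forall>l\<in>H. \<forall>b\<in>A. w l b \<le> M" "M \<ge> 1" shows "fw w l \<le> M"
proof (cases "l \<in> H")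
  case True
  have "(\<Sum>b\<in>A. w l b * \<pi> l b) \<le> (\<Sum>b\<in>A. M * \<pi> l b)"
    using assms True pinn by (intro sum_mono mult_right_mono) auto
  also have "\<dots> = M" using pisum True by (simp add: sum_distrib_left[symmetric])
  finally show ?thesis using True cost_H unfolding fw_def if_P[OF True] by simp
next
  case False then show ?thesis using cost01[of l] assms unfolding fw_def if_not_P[OF False] by simp
qed

lemma fw_nn: assumes "\<forall>l\<in>H. \<forall>b\<in>A. 0 \<le> w l b" shows "0 \<le> fw w l"
proof (cases "l \<in> H")
  case True
  have "0 \<le> (\<Sum>b\<in>A. w l b * \<pi> l b)" using assms True pinn by (intro sum_nonneg) auto
  then show ?thesis using cost01[of l] unfolding fw_def if_P[OF True] by simp
next
  case False then show ?thesis using cost01[of l] unfolding fw_def if_not_P[OF False] by simp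
qed

lemma fw_mono: assumes "\<forall>l\<in>H. \<forall>b\<in>A. w l b \<le> w' l b" shows "fw w l \<le> fw w' l"
proof (cases "l \<in> H")
  case True
  have "(\<Sum>b\<in>A. w l b * \<pi> l b) \<le> (\<Sum>b\<in>A. w' l b * \<pi> l b)"
    using assms True pinn by (intro sum_mono mult_right_mono) auto
  then show ?thesis unfolding fw_def if_P[OF True] by simp
next
  case False then show ?thesis unfolding fw_def if_not_P[OF False] by simp
qed

lemma fw_shift: assumes "\<eta> \<ge> 0" shows "fw (\<lambda>l b. w l b + \<eta>) l \<le> fw w l + \<eta>"
proof (cases "l \<in> H")
  case True
  have "(\<Sum>b\<in>A. (w l b + \<eta>) * \<pi> l b) = (\<Sum>b\<in>A. w l b * \<pi> l b) + \<eta> * (\<Sum>b\<in>A. \<pi> l b)"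
    by (simp add: algebra_simps sum.distrib sum_distrib_left)
  then show ?thesis using True pisum assms unfolding fw_def if_P[OF True] by simp
next
  case False then show ?thesis using assms unfolding fw_def if_not_P[OF False] by simp
qed

lemma fw_scale: assumes "0 \<le> \<gamma>" "\<gamma> \<le> 1" "\<forall>l\<in>H. \<forall>b\<in>A. 0 \<le> w l b"
  shows "\<gamma> * fw w l \<le> fw (\<lambda>l b. \<gamma> * w l b) l"
proof -
  have "\<gamma> * cost U l \<le> cost U l" using assms cost01[of l] by (simp add: mult_left_le_one_le)
  moreover have "\<gamma> * (\<Sum>b\<in>A. w l b * \<pi> l b) = (\<Sum>b\<in>A. \<gamma> * w l b * \<pi> l b)"
    by (simp add: sum_distrib_left algebra_simps)
  ultimately show ?thesis by (auto simp: fw_def algebra_simps)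
qed

lemma fw_disc: assumes "0 \<le> \<gamma>" "\<gamma> \<le> 1" "0 \<le> r" "\<forall>l\<in>H. \<forall>b\<in>A. 0 \<le> w l b"
  shows "fw (\<lambda>l b. \<gamma> * (w l b + r)) l \<le> fw w l + \<gamma> * r"
proof (cases "l \<in> H")
  case True
  have "(\<Sum>b\<in>A. \<gamma> * (w l b + r) * \<pi> l b) = \<gamma> * (\<Sum>b\<in>A. w l b * \<pi> l b) + \<gamma> * r * (\<Sum>b\<in>A. \<pi> l b)"
    by (simp add: algebra_simps sum.distrib sum_distrib_left)
  moreover have "\<gamma> * (\<Sum>b\<in>A. w l b * \<pi> l b) \<le> (\<Sum>b\<in>A. w l b * \<pi> l b)"
    using assms True pinn by (intro mult_left_le_one_le sum_nonneg) auto
  ultimately show ?thesis using True pisum unfolding fw_def if_P[OF True] by simp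
next
  case False then show ?thesis using assms unfolding fw_def if_not_P[OF False] by simp
qed

lemma T_ub: assumes "y \<in> H" "b \<in> A" "\<mu> \<in> ball y b" "\<And>l. l \<in> X \<Longrightarrow> fw w l \<le> C"
  shows "(\<Sum>l\<in>X. \<mu> l * fw w l) \<le> T w y b"
  unfolding T_def
proof (rule cSUP_upper[OF assms(3)])
  show "bdd_above ((\<lambda>\<mu>. \<Sum>l\<in>X. \<mu> l * fw w l) ` ball y b)"
    using assms(4) by (intro bdd_aboveI[where M=C]) (auto intro!: dist_sum_le[OF finX] simp: ball_def)
qed

lemma T_le: assumes "y \<in> H" "b \<in> A" "\<And>\<mu>. \<mu> \<in> ball y b \<Longrightarrow> (\<Sum>l\<in>X. \<mu> l * fw w l) \<le> C"
  shows "T w y b \<le> C"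
  unfolding T_def using ball_ne[OF assms(1,2)] assms(3) by (intro cSUP_least) auto

lemma T_approx: assumes "y \<in> H" "b \<in> A" "\<And>l. l \<in> X \<Longrightarrow> fw w l \<le> C" "e > 0"
  shows "\<exists>\<mu>\<in>ball y b. T w y b - e < (\<Sum>l\<in>X. \<mu> l * fw w l)"
proof -
  have bd: "bdd_above ((\<lambda>\<mu>. \<Sum>l\<in>X. \<mu> l * fw w l) ` ball y b)"
    using assms(3) by (intro bdd_aboveI[where M=C]) (auto intro!: dist_sum_le[OF finX] simp: ball_def)
  have "T w y b - e < T w y b" using assms by simp
  then show ?thesis unfolding T_def using less_cSUP_iff[OF _ bd] ball_ne[OF assms(1,2)] by blast
qed

lemma T_mono: assumes "y \<in> H" "b \<in> A" "\<forall>l\<in>H. \<forall>b\<in>A. w l b \<le> w' l b"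
  "\<forall>l\<in>H. \<forall>b\<in>A. w' l b \<le> M" "M \<ge> 1"
  shows "T w y b \<le> T w' y b"
proof (rule T_le[OF assms(1,2)])
  fix \<mu> assume mu: "\<mu> \<in> ball y b"
  have "(\<Sum>l\<in>X. \<mu> l * fw w l) \<le> (\<Sum>l\<in>X. \<mu> l * fw w' l)"
    using ball_dist[OF mu] fw_mono[OF assms(3)] by (intro sum_mono mult_left_mono) (auto simp: is_dist_def)
  also have "\<dots> \<le> T w' y b" using T_ub[OF assms(1,2) mu] fw_le[OF assms(4,5)] by blast
  finally show "(\<Sum>l\<in>X. \<mu> l * fw w l) \<le> T w' y b" .
qed

lemma T_shift: assumes "y \<in> H" "b \<in> A" "\<eta> \<ge> 0" "\<forall>l\<in>H. \<forall>b\<in>A. w l b \<le> M" "M \<ge> 1"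
  shows "T (\<lambda>l b. w l b + \<eta>) y b \<le> T w y b + \<eta>"
proof (rule T_le[OF assms(1,2)])
  fix \<mu> assume mu: "\<mu> \<in> ball y b"
  have d: "is_dist X \<mu>" using ball_dist[OF mu] .
  have "(\<Sum>l\<in>X. \<mu> l * fw (\<lambda>l b. w l b + \<eta>) l) \<le> (\<Sum>l\<in>X. \<mu> l * (fw w l + \<eta>))"
    using d fw_shift[OF assms(3)] by (intro sum_mono mult_left_mono) (auto simp: is_dist_def)
  also have "\<dots> = (\<Sum>l\<in>X. \<mu> l * fw w l) + \<eta>"
  proof -
    have "(\<Sum>l\<in>X. \<mu> l * \<eta>) = (\<Sum>l\<in>X. \<mu> l) * \<eta>" by (simp add: sum_distrib_right)
    then have "(\<Sum>l\<in>X. \<mu> l * \<eta>) = \<eta>" using d by (simp add: is_dist_def)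
    then show ?thesis by (simp add: distrib_left sum.distrib)
  qed
  also have "\<dots> \<le> T w y b + \<eta>" using T_ub[OF assms(1,2) mu] fw_le[OF assms(4,5)] by auto
  finally show "(\<Sum>l\<in>X. \<mu> l * fw (\<lambda>l b. w l b + \<eta>) l) \<le> T w y b + \<eta>" .
qed

lemma T_scale: assumes "y \<in> H" "b \<in> A" "0 < \<gamma>" "\<gamma> \<le> 1" "\<forall>l\<in>H. \<forall>b\<in>A. 0 \<le> w l b \<and> w l b \<le> M" "M \<ge> 1"
  shows "\<gamma> * T w y b \<le> T (\<lambda>l b. \<gamma> * w l b) y b"
proof -
  have bd: "\<forall>l\<in>H. \<forall>b\<in>A. \<gamma> * w l b \<le> M"
    using assms(3-5) by (auto intro: order_trans[OF mult_left_le_one_le])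
  have "T w y b \<le> T (\<lambda>l b. \<gamma> * w l b) y b / \<gamma>"
  proof (rule T_le[OF assms(1,2)])
    fix \<mu> assume mu: "\<mu> \<in> ball y b"
    have d: "is_dist X \<mu>" using ball_dist[OF mu] .
    have "\<gamma> * (\<Sum>l\<in>X. \<mu> l * fw w l) = (\<Sum>l\<in>X. \<mu> l * (\<gamma> * fw w l))"
      by (simp add: sum_distrib_left algebra_simps)
    also have "\<dots> \<le> (\<Sum>l\<in>X. \<mu> l * fw (\<lambda>l b. \<gamma> * w l b) l)"
      using d assms fw_scale[of \<gamma> w] by (intro sum_mono mult_left_mono) (auto simp: is_dist_def)
    also have "\<dots> \<le> T (\<lambda>l b. \<gamma> * w l b) y b"
      using T_ub[OF assms(1,2) mu] fw_le[OF bd assms(6)] by blast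
    finally show "(\<Sum>l\<in>X. \<mu> l * fw w l) \<le> T (\<lambda>l b. \<gamma> * w l b) y b / \<gamma>"
      using assms(3) by (simp add: pos_le_divide_eq mult.commute)
  qed
  then show ?thesis using assms(3) by (simp add: pos_le_divide_eq mult.commute)
qed

lemma T_01: assumes "y \<in> H" "b \<in> A" "\<forall>l\<in>H. \<forall>b\<in>A. 0 \<le> w l b \<and> w l b \<le> 1"
  shows "0 \<le> T w y b \<and> T w y b \<le> 1"
proof
  have "0 \<le> (\<Sum>l\<in>X. P y b l * fw w l)"
    using Pd[OF assms(1,2)] assms(3) fw_nn by (intro dist_sum_ge[OF finX]) auto
  also have "\<dots> \<le> T w y b" using T_ub[OF assms(1,2) ball_ne[OF assms(1,2)], of w 1] assms(3) fw_le[of w 1] by auto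
  finally show "0 \<le> T w y b" .
  show "T w y b \<le> 1"
    using assms(3) fw_le[of w 1] by (intro T_le[OF assms(1,2)] dist_sum_le[OF finX] ball_dist) auto
qed

end



lemma lists_Suc: "{xs. set xs \<subseteq> B \<and> length xs = Suc t} = (\<lambda>(q,r). q # r) ` (B \<times> {xs. set xs \<subseteq> B \<and> length xs = t})"
  by (auto simp: length_Suc_conv image_iff)

context rmdp begin

definition S where "S Pt t y b = (\<Sum>xs\<in>{xs. set xs \<subseteq> H \<times> A \<and> length xs = t}. \<Sum>z\<in>U. traj_prob Pt \<pi> y b xs z)"

lemma Ec_S: "y \<in> H \<Longrightarrow> Ec Pt n y b = (\<Sum>t<n. S Pt t y b)"
  by (simp add: exp_cost_trunc_def S_def)
lemma Ec_out: assumes "y \<notin> H" shows "Ec Pt n y b = 0"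
  unfolding exp_cost_trunc_def Let_def if_not_P[OF assms] by simp
lemma Ec_0: "Ec Pt 0 y b = 0"
  by (simp add: exp_cost_trunc_def)

lemma S0: "S Pt 0 y b = (\<Sum>z\<in>U. Pt y b z)"
proof -
  have "{xs. set xs \<subseteq> H \<times> A \<and> length xs = 0} = {[]}" by auto
  then show ?thesis by (simp add: S_def)
qed

lemma SSuc: "S Pt (Suc t) y b = (\<Sum>l\<in>H. \<Sum>b'\<in>A. Pt y b l * \<pi> l b' * S Pt t l b')"
proof -
  let ?L = "{xs. set xs \<subseteq> H \<times> A \<and> length xs = t}"
  have inj: "inj_on (\<lambda>(q,r). q # r) ((H \<times> A) \<times> ?L)" by (auto simp: inj_on_def)
  have "S Pt (Suc t) y b = (\<Sum>qr\<in>(H \<times> A) \<times> ?L. \<Sum>z\<in>U. traj_prob Pt \<pi> y b ((\<lambda>(q,r). q # r) qr) z)"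
    unfolding S_def lists_Suc sum.reindex[OF inj] comp_def ..
  also have "\<dots> = (\<Sum>q\<in>H \<times> A. \<Sum>r\<in>?L. \<Sum>z\<in>U. traj_prob Pt \<pi> y b (q # r) z)"
    by (simp only: sum_prod_split prod.case)
  also have "\<dots> = (\<Sum>q\<in>H \<times> A. Pt y b (fst q) * \<pi> (fst q) (snd q) * S Pt t (fst q) (snd q))"
  proof (intro sum.cong refl)
    fix q :: "real \<times> 'a"
    obtain l b' where q: "q = (l, b')" by (cases q)
    show "(\<Sum>r\<in>?L. \<Sum>z\<in>U. traj_prob Pt \<pi> y b (q # r) z) = Pt y b (fst q) * \<pi> (fst q) (snd q) * S Pt t (fst q) (snd q)"
      unfolding q S_def by (simp add: sum_distrib_left)
  qed
  also have "\<dots> = (\<Sum>l\<in>H. \<Sum>b'\<in>A. Pt y b l * \<pi> l b' * S Pt t l b')"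
    by (simp add: sum.cartesian_product case_prod_beta)
  finally show ?thesis .
qed

lemma Ec_rec: assumes y: "y \<in> H"
  shows "Ec Pt (Suc n) y b = (\<Sum>l\<in>X. Pt y b l * fw (\<lambda>l b. Ec Pt n l b) l)"
proof -
  have "Ec Pt (Suc n) y b = S Pt 0 y b + (\<Sum>t<n. S Pt (Suc t) y b)"
    by (simp only: Ec_S[OF y] sum.lessThan_Suc_shift)
  also have "(\<Sum>t<n. S Pt (Suc t) y b) = (\<Sum>l\<in>H. \<Sum>b'\<in>A. Pt y b l * \<pi> l b' * (\<Sum>t<n. S Pt t l b'))"
  proof -
    have "(\<Sum>t<n. S Pt (Suc t) y b) = (\<Sum>t<n. \<Sum>l\<in>H. \<Sum>b'\<in>A. Pt y b l * \<pi> l b' * S Pt t l b')"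
      by (simp only: SSuc)
    also have "\<dots> = (\<Sum>l\<in>H. \<Sum>t<n. \<Sum>b'\<in>A. Pt y b l * \<pi> l b' * S Pt t l b')" by (rule sum.swap)
    also have "\<dots> = (\<Sum>l\<in>H. \<Sum>b'\<in>A. \<Sum>t<n. Pt y b l * \<pi> l b' * S Pt t l b')"
      by (intro sum.cong refl) (rule sum.swap)
    also have "\<dots> = (\<Sum>l\<in>H. \<Sum>b'\<in>A. Pt y b l * \<pi> l b' * (\<Sum>t<n. S Pt t l b'))"
      by (simp only: sum_distrib_left)
    finally show ?thesis .
  qed
  also have "\<dots> = (\<Sum>l\<in>H. \<Sum>b'\<in>A. Pt y b l * \<pi> l b' * Ec Pt n l b')"
    by (intro sum.cong refl) (simp add: Ec_S)
  finally have L: "Ec Pt (Suc n) y b = (\<Sum>z\<in>U. Pt y b z) + (\<Sum>l\<in>H. \<Sum>b'\<in>A. Pt y b l * \<pi> l b' * Ec Pt n l b')"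
    by (simp add: S0)
  have "(\<Sum>l\<in>X. Pt y b l * fw (\<lambda>l b. Ec Pt n l b) l) =
     (\<Sum>l\<in>X. (if l \<in> U then Pt y b l else 0)) + (\<Sum>l\<in>X. if l \<in> H then (\<Sum>b'\<in>A. Pt y b l * \<pi> l b' * Ec Pt n l b') else 0)"
  proof -
    have "(\<Sum>l\<in>X. Pt y b l * fw (\<lambda>l b. Ec Pt n l b) l) =
      (\<Sum>l\<in>X. (if l \<in> U then Pt y b l else 0) + (if l \<in> H then (\<Sum>b'\<in>A. Pt y b l * \<pi> l b' * Ec Pt n l b') else 0))"
    proof (intro sum.cong refl)
      fix l assume l: "l \<in> X"
      show "Pt y b l * fw (\<lambda>l b. Ec Pt n l b) l = (if l \<in> U then Pt y b l else 0) + (if l \<in> H then (\<Sum>b'\<in>A. Pt y b l * \<pi> l b' * Ec Pt n l b') else 0)"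
      proof (cases "l \<in> H")
        case True
        then have "l \<notin> U" by auto
        then show ?thesis unfolding fw_def if_P[OF True] using cost_H[OF True]
          by (simp add: sum_distrib_left algebra_simps)
      next
        case False
        then show ?thesis unfolding fw_def if_not_P[OF False] by (simp add: cost_def)
      qed
    qed
    then show ?thesis by (simp only: sum.distrib)
  qed
  also have "\<dots> = (\<Sum>z\<in>U. Pt y b z) + (\<Sum>l\<in>H. \<Sum>b'\<in>A. Pt y b l * \<pi> l b' * Ec Pt n l b')"
  proof -
    have XU: "X \<inter> U = U" and XH: "X \<inter> H = H" using UX by auto
    have 1: "(\<Sum>l\<in>X. (if l \<in> U then Pt y b l else 0)) = (\<Sum>z\<in>U. Pt y b z)"
      using sum.inter_restrict[OF finX, of "Pt y b" U] unfolding XU by simp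
    have 2: "(\<Sum>l\<in>X. if l \<in> H then (\<Sum>b'\<in>A. Pt y b l * \<pi> l b' * Ec Pt n l b') else 0)
       = (\<Sum>l\<in>H. \<Sum>b'\<in>A. Pt y b l * \<pi> l b' * Ec Pt n l b')"
      using sum.inter_restrict[OF finX, of "\<lambda>l. \<Sum>b'\<in>A. Pt y b l * \<pi> l b' * Ec Pt n l b'" H] unfolding XH by simp
    show ?thesis unfolding 1 2 ..
  qed
  finally show ?thesis using L by simp
qed

lemma Ec_01: assumes "good Pt" "b \<in> A" shows "0 \<le> Ec Pt n y b \<and> Ec Pt n y b \<le> 1"
  using assms(2)
proof (induction n arbitrary: y b)
  case 0 then show ?case by (simp add: Ec_0)
next
  case (Suc n)
  show ?case
  proof (cases "y \<in> H")
    case False then show ?thesis by (simp add: Ec_out)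
  next
    case True
    have d: "is_dist X (Pt y b)" using assms(1) True Suc.prems by (auto simp: good_def)
    have b1: "\<forall>l\<in>H. \<forall>b\<in>A. Ec Pt n l b \<le> 1" and b0: "\<forall>l\<in>H. \<forall>b\<in>A. 0 \<le> Ec Pt n l b" using Suc.IH by auto
    show ?thesis unfolding Ec_rec[OF True]
      using fw_le[OF b1] fw_nn[OF b0] by (auto intro!: dist_sum_le[OF finX d] dist_sum_ge[OF finX d])
  qed
qed

lemma ec_bdd: "good Pt \<Longrightarrow> b \<in> A \<Longrightarrow> bdd_above (range (\<lambda>n. Ec Pt n y b))"
  using Ec_01 by (intro bdd_aboveI[where M=1]) auto

lemma ec_upper: "good Pt \<Longrightarrow> b \<in> A \<Longrightarrow> Ec Pt n y b \<le> exp_cost X E U A Pt \<pi> y b"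
  unfolding exp_cost_def by (rule cSUP_upper[OF _ ec_bdd]) auto

lemma ec_01: "good Pt \<Longrightarrow> b \<in> A \<Longrightarrow> 0 \<le> exp_cost X E U A Pt \<pi> y b \<and> exp_cost X E U A Pt \<pi> y b \<le> 1"
proof
  assume a: "good Pt" "b \<in> A"
  show "0 \<le> exp_cost X E U A Pt \<pi> y b" using ec_upper[OF a, where n=0 and y=y] by (simp add: Ec_0)
  show "exp_cost X E U A Pt \<pi> y b \<le> 1" unfolding exp_cost_def using Ec_01[OF a] by (intro cSUP_least) auto
qed

lemma Q_bdd: "b \<in> A \<Longrightarrow> bdd_above ((\<lambda>Pt. exp_cost X E U A Pt \<pi> y b) ` Amb)"
  using ec_01 Amb_good by (intro bdd_aboveI[where M=1]) auto

lemma Q_upper: "Pt \<in> Amb \<Longrightarrow> b \<in> A \<Longrightarrow> exp_cost X E U A Pt \<pi> y b \<le> Q y b"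
  unfolding robustQ_def by (rule cSUP_upper[OF _ Q_bdd])

lemma Q_01: "b \<in> A \<Longrightarrow> 0 \<le> Q y b \<and> Q y b \<le> 1"
proof
  assume b: "b \<in> A"
  show "0 \<le> Q y b" using Q_upper[OF P_Amb b, of y] ec_01[OF Amb_good[OF P_Amb] b, of y] by linarith
  show "Q y b \<le> 1" unfolding robustQ_def using ec_01 Amb_good b Amb_ne by (intro cSUP_least) auto
qed

lemma Q_out: "y \<notin> H \<Longrightarrow> Q y b = 0"
proof -
  assume y: "y \<notin> H"
  have "exp_cost X E U A Pt \<pi> y b = 0" for Pt unfolding exp_cost_def using y by (simp add: Ec_out)
  then show ?thesis unfolding robustQ_def using Amb_ne by simp
qed

lemma Q_le_TQ: assumes y: "y \<in> H" and b: "b \<in> A" shows "Q y b \<le> T Q y b"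
  unfolding robustQ_def[of X E U A \<delta> P \<pi> y b]
proof (rule cSUP_least[OF Amb_ne])
  fix Pt assume Pt: "Pt \<in> Amb"
  have g: "good Pt" using Amb_good[OF Pt] .
  have Qb1: "\<forall>l\<in>H. \<forall>b\<in>A. Q l b \<le> 1" and Qb0: "\<forall>l\<in>H. \<forall>b\<in>A. 0 \<le> Q l b" using Q_01 by auto
  show "exp_cost X E U A Pt \<pi> y b \<le> T Q y b" unfolding exp_cost_def
  proof (rule cSUP_least)
    fix n show "Ec Pt n y b \<le> T Q y b"
    proof (cases n)
      case 0
      have "\<forall>l\<in>H. \<forall>b\<in>A. 0 \<le> Q l b \<and> Q l b \<le> 1" using Q_01 by auto
      then show ?thesis using T_01[OF y b] 0 by (simp add: Ec_0)
    next
      case (Suc m)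
      have d: "is_dist X (Pt y b)" using g y b by (auto simp: good_def)
      have "Ec Pt n y b = (\<Sum>l\<in>X. Pt y b l * fw (\<lambda>l b. Ec Pt m l b) l)" using Ec_rec[OF y] Suc by simp
      also have "\<dots> \<le> (\<Sum>l\<in>X. Pt y b l * fw Q l)"
      proof (intro sum_mono mult_left_mono)
        fix l assume "l \<in> X"
        then show "0 \<le> Pt y b l" using d by (auto simp: is_dist_def)
        show "fw (\<lambda>l b. Ec Pt m l b) l \<le> fw Q l"
          by (rule fw_mono) (auto intro: order_trans[OF ec_upper[OF g] Q_upper[OF Pt]])
      qed
      also have "\<dots> \<le> T Q y b" using T_ub[OF y b Amb_ball[OF Pt y b]] fw_le[OF Qb1] by auto
      finally show ?thesis .
    qed
  qed simp
qed

end



context rmdp begin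

lemma LB:
  assumes g0: "0 < \<gamma>" and g1: "\<gamma> < 1"
    and w01: "\<forall>l\<in>H. \<forall>b\<in>A. 0 \<le> w l b \<and> w l b \<le> 1"
    and wT: "\<forall>l\<in>H. \<forall>b\<in>A. w l b \<le> T (\<lambda>l b. \<gamma> * w l b) l b"
    and y: "y \<in> H" and b: "b \<in> A"
  shows "w y b \<le> Q y b"
proof -
  have gw1: "\<forall>l\<in>H. \<forall>b\<in>A. \<gamma> * w l b \<le> 1" using w01 g0 g1
    by (auto intro: order_trans[OF mult_left_le_one_le])
  have main: "w y b \<le> Q y b + \<gamma> ^ k + real k * e" if e: "e > 0" for k :: nat and e :: real
  proof -
    define Pt where "Pt = (\<lambda>y b. SOME \<mu>. \<mu> \<in> ball y b \<and> T (\<lambda>l b. \<gamma> * w l b) y b - e < (\<Sum>l\<in>X. \<mu> l * fw (\<lambda>l b. \<gamma> * w l b) l))"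
    have Pt: "Pt y b \<in> ball y b \<and> T (\<lambda>l b. \<gamma> * w l b) y b - e < (\<Sum>l\<in>X. Pt y b l * fw (\<lambda>l b. \<gamma> * w l b) l)"
      if "y \<in> H" "b \<in> A" for y b
    proof -
      have "\<exists>\<mu>\<in>ball y b. T (\<lambda>l b. \<gamma> * w l b) y b - e < (\<Sum>l\<in>X. \<mu> l * fw (\<lambda>l b. \<gamma> * w l b) l)"
      proof -
        have "\<And>l. l \<in> X \<Longrightarrow> fw (\<lambda>l b. \<gamma> * w l b) l \<le> 1" using fw_le[OF gw1] by simp
        from T_approx[OF that this e] show ?thesis .
      qed
      then have "\<exists>\<mu>. \<mu> \<in> ball y b \<and> T (\<lambda>l b. \<gamma> * w l b) y b - e < (\<Sum>l\<in>X. \<mu> l * fw (\<lambda>l b. \<gamma> * w l b) l)" by blast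
      then show ?thesis unfolding Pt_def by (rule someI_ex)
    qed
    have PtA: "Pt \<in> Amb" using Pt by (auto simp: ambiguity_set_def ball_def)
    have g: "good Pt" using Amb_good[OF PtA] .
    have ind: "\<forall>y\<in>H. \<forall>b\<in>A. w y b \<le> Ec Pt k y b + \<gamma> ^ k + real k * e"
    proof (induction k)
      case 0 then show ?case using w01 by (simp add: Ec_0)
    next
      case (Suc k)
      show ?case
      proof (intro ballI)
        fix y b assume y: "y \<in> H" and b: "b \<in> A"
        define r where "r = \<gamma> ^ k + real k * e"
        have r0: "0 \<le> r" using g0 e by (auto simp: r_def)
        have d: "is_dist X (Pt y b)" using ball_dist Pt[OF y b] by blast
        have E0: "\<forall>l\<in>H. \<forall>b\<in>A. 0 \<le> Ec Pt k l b" using Ec_01[OF g] by auto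
        have "w y b \<le> T (\<lambda>l b. \<gamma> * w l b) y b" using wT y b by auto
        also have "\<dots> < e + (\<Sum>l\<in>X. Pt y b l * fw (\<lambda>l b. \<gamma> * w l b) l)" using Pt[OF y b] by auto
        also have "(\<Sum>l\<in>X. Pt y b l * fw (\<lambda>l b. \<gamma> * w l b) l) \<le> (\<Sum>l\<in>X. Pt y b l * (fw (\<lambda>l b. Ec Pt k l b) l + \<gamma> * r))"
        proof (intro sum_mono mult_left_mono)
          fix l assume l: "l \<in> X"
          show "0 \<le> Pt y b l" using d l by (auto simp: is_dist_def)
          have "fw (\<lambda>l b. \<gamma> * w l b) l \<le> fw (\<lambda>l b. \<gamma> * (Ec Pt k l b + r)) l"
            using Suc.IH g0 by (intro fw_mono) (auto intro!: mult_left_mono simp: add.assoc r_def)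
          also have "\<dots> \<le> fw (\<lambda>l b. Ec Pt k l b) l + \<gamma> * r"
            using fw_disc[OF _ _ r0 E0] g0 g1 by auto
          finally show "fw (\<lambda>l b. \<gamma> * w l b) l \<le> fw (\<lambda>l b. Ec Pt k l b) l + \<gamma> * r" .
        qed
        also have "(\<Sum>l\<in>X. Pt y b l * (fw (\<lambda>l b. Ec Pt k l b) l + \<gamma> * r)) = Ec Pt (Suc k) y b + \<gamma> * r"
        proof -
          have s1: "(\<Sum>l\<in>X. Pt y b l * (\<gamma> * r)) = \<gamma> * r"
            using d by (simp add: sum_distrib_right[symmetric] is_dist_def)
          show ?thesis unfolding Ec_rec[OF y] distrib_left sum.distrib s1 ..
        qed
        finally have "w y b < Ec Pt (Suc k) y b + (e + \<gamma> * r)" by simp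
        moreover have "e + \<gamma> * r \<le> \<gamma> ^ Suc k + real (Suc k) * e"
        proof -
          have "\<gamma> * (real k * e) \<le> real k * e" using g1 g0 e by (intro mult_left_le_one_le) auto
          then show ?thesis by (simp add: algebra_simps r_def)
        qed
        ultimately show "w y b \<le> Ec Pt (Suc k) y b + \<gamma> ^ Suc k + real (Suc k) * e" by simp
      qed
    qed
    have "Ec Pt k y b \<le> Q y b" using ec_upper[OF g b] Q_upper[OF PtA b] order_trans by blast
    moreover have "w y b \<le> Ec Pt k y b + \<gamma> ^ k + real k * e" using ind y b by blast
    ultimately show ?thesis by linarith
  qed
  have m2: "w y b \<le> Q y b + \<gamma> ^ k" for k
  proof (rule field_le_epsilon)
    fix e :: real assume e: "e > 0"
    have "w y b \<le> Q y b + \<gamma> ^ k + real k * (e / (real k + 1))" using main[of "e/(real k+1)" k] e by simp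
    moreover have "real k * (e / (real k + 1)) \<le> e" using e by (simp add: field_simps)
    ultimately show "w y b \<le> Q y b + \<gamma> ^ k + e" by simp
  qed
  have "(\<lambda>k. \<gamma> ^ k) \<longlonglongrightarrow> 0" using g0 g1 by (intro LIMSEQ_power_zero) auto
  then have "w y b - Q y b \<le> 0" using m2 by (intro LIMSEQ_le_const[of "\<lambda>k. \<gamma> ^ k"]) (auto simp: algebra_simps)
  then show ?thesis by simp
qed

primrec uu :: "nat \<Rightarrow> real \<Rightarrow> 'a \<Rightarrow> real" where
  "uu 0 = (\<lambda>l b. 0)" | "uu (Suc n) = T (uu n)"

primrec vv :: "real \<Rightarrow> nat \<Rightarrow> real \<Rightarrow> 'a \<Rightarrow> real" where
  "vv \<gamma> 0 = (\<lambda>l b. 0)" | "vv \<gamma> (Suc n) = T (\<lambda>l b. \<gamma> * vv \<gamma> n l b)"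

lemma T_01_all: assumes "\<forall>l\<in>H. \<forall>b\<in>A. 0 \<le> w l b \<and> w l b \<le> 1"
  shows "\<forall>y\<in>H. \<forall>b\<in>A. 0 \<le> T w y b \<and> T w y b \<le> 1"
  using T_01[OF _ _ assms] by blast

lemma T_mono_all: assumes "\<forall>l\<in>H. \<forall>b\<in>A. w l b \<le> w' l b" "\<forall>l\<in>H. \<forall>b\<in>A. w' l b \<le> 1"
  shows "\<forall>y\<in>H. \<forall>b\<in>A. T w y b \<le> T w' y b"
  using T_mono[OF _ _ assms order_refl] by blast

lemma uu_01: "\<forall>l\<in>H. \<forall>b\<in>A. 0 \<le> uu n l b \<and> uu n l b \<le> 1"
proof (induction n)
  case 0 then show ?case by simp
next
  case (Suc n) then show ?case using T_01_all[OF Suc.IH] by simp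
qed

lemma uu_mono: "\<forall>l\<in>H. \<forall>b\<in>A. uu n l b \<le> uu (Suc n) l b"
proof (induction n)
  case 0 then show ?case using T_01_all[OF uu_01[of 0]] by simp
next
  case (Suc n)
  have "\<forall>l\<in>H. \<forall>b\<in>A. uu (Suc n) l b \<le> 1" using uu_01 by blast
  then show ?case using T_mono_all[OF Suc.IH] by simp
qed

lemma vv_01: assumes "0 \<le> \<gamma>" "\<gamma> \<le> 1" shows "\<forall>l\<in>H. \<forall>b\<in>A. 0 \<le> vv \<gamma> n l b \<and> vv \<gamma> n l b \<le> 1"
proof (induction n)
  case 0 then show ?case by simp
next
  case (Suc n)
  have "\<forall>l\<in>H. \<forall>b\<in>A. 0 \<le> \<gamma> * vv \<gamma> n l b \<and> \<gamma> * vv \<gamma> n l b \<le> 1"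
    using Suc assms by (auto intro: order_trans[OF mult_left_le_one_le])
  then show ?case using T_01_all by simp
qed

lemma vv_mono: assumes "0 \<le> \<gamma>" "\<gamma> \<le> 1" shows "\<forall>l\<in>H. \<forall>b\<in>A. vv \<gamma> n l b \<le> vv \<gamma> (Suc n) l b"
proof (induction n)
  case 0
  have "\<forall>l\<in>H. \<forall>b\<in>A. 0 \<le> \<gamma> * vv \<gamma> 0 l b \<and> \<gamma> * vv \<gamma> 0 l b \<le> 1" by simp
  then show ?case using T_01_all by simp
next
  case (Suc n)
  have b1: "\<forall>l\<in>H. \<forall>b\<in>A. \<gamma> * vv \<gamma> (Suc n) l b \<le> 1"
    using vv_01[OF assms, of "Suc n"] assms by (auto intro: order_trans[OF mult_left_le_one_le])
  have "\<forall>l\<in>H. \<forall>b\<in>A. \<gamma> * vv \<gamma> n l b \<le> \<gamma> * vv \<gamma> (Suc n) l b"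
    using Suc assms by (auto intro: mult_left_mono)
  from T_mono_all[OF this b1] show ?case by (simp only: vv.simps)
qed

lemma vv_le_Q: assumes "0 < \<gamma>" "\<gamma> < 1" "y \<in> H" "b \<in> A" shows "vv \<gamma> n y b \<le> Q y b"
proof (rule LB[OF assms(1,2) _ _ assms(3,4)])
  show "\<forall>l\<in>H. \<forall>b\<in>A. 0 \<le> vv \<gamma> n l b \<and> vv \<gamma> n l b \<le> 1" using vv_01 assms by auto
  show "\<forall>l\<in>H. \<forall>b\<in>A. vv \<gamma> n l b \<le> T (\<lambda>l b. \<gamma> * vv \<gamma> n l b) l b"
    using vv_mono[of \<gamma> n] assms by auto
qed

lemma vv_ge: assumes "0 < \<gamma>" "\<gamma> \<le> 1" shows "\<forall>l\<in>H. \<forall>b\<in>A. \<gamma> ^ n * uu n l b \<le> vv \<gamma> n l b"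
proof (induction n)
  case 0 then show ?case by simp
next
  case (Suc n)
  show ?case
  proof (intro ballI)
    fix y b assume y: "y \<in> H" and b: "b \<in> A"
    have gp: "0 < \<gamma> ^ Suc n" "\<gamma> ^ Suc n \<le> 1" using assms by (simp, intro power_le_one) auto
    have "\<gamma> ^ Suc n * uu (Suc n) y b = \<gamma> ^ Suc n * T (uu n) y b" by simp
    also have "\<dots> \<le> T (\<lambda>l b. \<gamma> ^ Suc n * uu n l b) y b"
      using uu_01 by (intro T_scale[OF y b gp, where M=1]) auto
    also have "\<dots> \<le> T (\<lambda>l b. \<gamma> * vv \<gamma> n l b) y b"
    proof (rule T_mono[OF y b _ _ order_refl])
      show "\<forall>l\<in>H. \<forall>b\<in>A. \<gamma> ^ Suc n * uu n l b \<le> \<gamma> * vv \<gamma> n l b"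
        using Suc.IH assms by (auto simp: mult.assoc intro!: mult_left_mono)
      show "\<forall>l\<in>H. \<forall>b\<in>A. \<gamma> * vv \<gamma> n l b \<le> 1"
        using vv_01[of \<gamma> n] assms by (auto intro: order_trans[OF mult_left_le_one_le])
    qed
    also have "\<dots> = vv \<gamma> (Suc n) y b" by simp
    finally show "\<gamma> ^ Suc n * uu (Suc n) y b \<le> vv \<gamma> (Suc n) y b" .
  qed
qed

lemma uu_le_Q: assumes y: "y \<in> H" and b: "b \<in> A" shows "uu n y b \<le> Q y b"
proof -
  have lim: "((\<lambda>\<gamma>. \<gamma> ^ n * uu n y b) \<longlongrightarrow> 1 ^ n * uu n y b) (at_left 1)"
    by (intro tendsto_intros)
  have ev: "eventually (\<lambda>\<gamma>. \<gamma> ^ n * uu n y b \<le> Q y b) (at_left (1::real))"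
  proof -
    have "eventually (\<lambda>\<gamma>. \<gamma> \<in> {0<..<1}) (at_left (1::real))" by (rule eventually_at_left_real) simp
    then show ?thesis
    proof (rule eventually_mono)
      fix \<gamma> :: real assume "\<gamma> \<in> {0<..<1}"
      then show "\<gamma> ^ n * uu n y b \<le> Q y b"
        using vv_ge[of \<gamma> n] vv_le_Q[of \<gamma> y b n] y b by force
    qed
  qed
  have "1 ^ n * uu n y b \<le> Q y b"
    using tendsto_upperbound[OF lim ev] by (simp add: trivial_limit_at_left_real)
  then show ?thesis by simp
qed

lemma Ec_le_uu: assumes "Pt \<in> Amb" shows "\<forall>y\<in>H. \<forall>b\<in>A. Ec Pt n y b \<le> uu n y b"
proof (induction n)
  case 0 then show ?case by (simp add: Ec_0)
next
  case (Suc n)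
  show ?case
  proof (intro ballI)
    fix y b assume y: "y \<in> H" and b: "b \<in> A"
    have d: "is_dist X (Pt y b)" using Amb_good[OF assms] y b by (auto simp: good_def)
    have "Ec Pt (Suc n) y b = (\<Sum>l\<in>X. Pt y b l * fw (\<lambda>l b. Ec Pt n l b) l)" using Ec_rec[OF y] .
    also have "\<dots> \<le> (\<Sum>l\<in>X. Pt y b l * fw (uu n) l)"
      using d Suc.IH by (intro sum_mono mult_left_mono fw_mono) (auto simp: is_dist_def)
    also have "\<dots> \<le> T (uu n) y b"
      using T_ub[OF y b Amb_ball[OF assms y b]] fw_le[of "uu n" 1] uu_01 by auto
    finally show "Ec Pt (Suc n) y b \<le> uu (Suc n) y b" by simp
  qed
qed

lemma uu_approx: assumes y: "y \<in> H" and b: "b \<in> A" and e: "e > 0"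
  shows "\<exists>n. Q y b - e \<le> uu n y b"
proof (rule ccontr)
  assume neg: "\<not> (\<exists>n. Q y b - e \<le> uu n y b)"
  define c where "c = Q y b - e"
  have lt: "uu n y b < c" for n
  proof -
    have "\<not> (Q y b - e \<le> uu n y b)" using neg by blast
    then show ?thesis unfolding c_def by linarith
  qed
  have "Q y b \<le> c" unfolding robustQ_def[of X E U A \<delta> P \<pi> y b]
  proof (rule cSUP_least[OF Amb_ne])
    fix Pt assume Pt: "Pt \<in> Amb"
    show "exp_cost X E U A Pt \<pi> y b \<le> c" unfolding exp_cost_def
    proof (rule cSUP_least)
      fix n
      have "Ec Pt n y b \<le> uu n y b" using Ec_le_uu[OF Pt] y b by blast
      then show "Ec Pt n y b \<le> c" using lt[of n] by linarith
    qed simp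
  qed
  then show False using e by (simp add: c_def)
qed

lemma uu_mono_le: assumes "y \<in> H" "b \<in> A" "m \<le> n" shows "uu m y b \<le> uu n y b"
proof (rule lift_Suc_mono_le[of "\<lambda>n. uu n y b"])
  fix n show "uu n y b \<le> uu (Suc n) y b" using uu_mono assms(1,2) by blast
qed (rule assms(3))

lemma TQ_le_Q: assumes x: "x \<in> H" and a: "a \<in> A" shows "T Q x a \<le> Q x a"
proof (rule field_le_epsilon)
  fix e :: real assume e: "e > 0"
  have "\<forall>q\<in>H \<times> A. \<exists>n. Q (fst q) (snd q) - e \<le> uu n (fst q) (snd q)"
    using uu_approx e by auto
  then have "\<exists>nf. \<forall>q\<in>H \<times> A. Q (fst q) (snd q) - e \<le> uu (nf q) (fst q) (snd q)" by (rule bchoice)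
  then obtain nf where nf: "\<And>q. q \<in> H \<times> A \<Longrightarrow> Q (fst q) (snd q) - e \<le> uu (nf q) (fst q) (snd q)"
    by blast
  define N where "N = Max (nf ` (H \<times> A))"
  have fin: "finite (H \<times> A)" using finH finA by auto
  have QN: "\<forall>l\<in>H. \<forall>b\<in>A. Q l b \<le> uu N l b + e"
  proof (intro ballI)
    fix l b assume l: "l \<in> H" and b: "b \<in> A"
    have "nf (l, b) \<le> N" unfolding N_def using fin l b by (intro Max_ge) auto
    then have "uu (nf (l,b)) l b \<le> uu N l b" using uu_mono_le l b by blast
    then show "Q l b \<le> uu N l b + e" using nf[of "(l,b)"] l b by auto
  qed
  have b1: "\<forall>l\<in>H. \<forall>b\<in>A. uu N l b + e \<le> 1 + e" using uu_01 by auto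
  have "T Q x a \<le> T (\<lambda>l b. uu N l b + e) x a"
    using T_mono[OF x a QN b1] e by simp
  also have "\<dots> \<le> T (uu N) x a + e"
    using uu_01 e by (intro T_shift[OF x a, where M=1]) auto
  also have "T (uu N) x a = uu (Suc N) x a" by simp
  also have "\<dots> \<le> Q x a" using uu_le_Q[OF x a] .
  finally show "T Q x a \<le> Q x a + e" by simp
qed

lemma Q_fix: assumes "x \<in> H" "a \<in> A" shows "Q x a = T Q x a"
  using Q_le_TQ[OF assms] TQ_le_Q[OF assms] by simp

end



theorem mainTheorem5:
  fixes X E U :: "real set" and A :: "'a set" and \<delta> :: real
    and P :: "real \<Rightarrow> 'a \<Rightarrow> real \<Rightarrow> real" and \<pi> :: "real \<Rightarrow> 'a \<Rightarrow> real"
    and x :: real and a :: 'a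
  assumes "finite X" and "finite A"
    and "E \<subseteq> X" and "U \<subseteq> X" and "E \<inter> U = {}"
    and "\<delta> \<ge> 0"
    and "\<And>y b. y \<in> X - (E \<union> U) \<Longrightarrow> b \<in> A \<Longrightarrow> is_dist X (P y b)"
    and "\<And>y. y \<in> X \<Longrightarrow> is_dist A (\<pi> y)"
    and "x \<in> X - (E \<union> U)" and "a \<in> A"
  shows "robustQ X E U A \<delta> P \<pi> x a =
     Inf {lam * \<delta> + (\<Sum>y\<in>X. h y * P x a y) | lam h. lam \<ge> 0 \<and>
          (\<forall>y\<in>X. Max ((\<lambda>l. - lam * \<bar>l - y\<bar> + cost U l
                 + (\<Sum>a'\<in>A. robustQ X E U A \<delta> P \<pi> l a' * \<pi> l a')) ` X) \<le> h y)}"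
proof -
  interpret M: rmdp X E U A \<delta> P \<pi>
    using assms(1-8) by unfold_locales auto
  let ?f = "\<lambda>l. cost U l + (\<Sum>a'\<in>A. robustQ X E U A \<delta> P \<pi> l a' * \<pi> l a')"
  interpret W: wdual X "P x a" ?f \<delta>
    using assms(1,6,7,9,10) by unfold_locales auto
  have fw_eq: "M.fw (robustQ X E U A \<delta> P \<pi>) l = ?f l" for l
  proof (cases "l \<in> X - (E \<union> U)")
    case True then show ?thesis unfolding M.fw_def if_P[OF True] by simp
  next
    case False
    then have "(\<Sum>a'\<in>A. robustQ X E U A \<delta> P \<pi> l a' * \<pi> l a') = 0" using M.Q_out by simp
    then show ?thesis unfolding M.fw_def if_not_P[OF False] by simp
  qed
  have "robustQ X E U A \<delta> P \<pi> x a = M.T (robustQ X E U A \<delta> P \<pi>) x a"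
    using M.Q_fix assms(9,10) by blast
  also have "\<dots> = (SUP \<mu>\<in>{\<mu>. is_dist X \<mu> \<and> wasserstein X \<mu> (P x a) \<le> \<delta>}. \<Sum>l\<in>X. \<mu> l * ?f l)"
    unfolding M.T_def M.ball_def fw_eq ..
  also have "\<dots> = Inf {lam * \<delta> + (\<Sum>y\<in>X. h y * P x a y) | lam h. lam \<ge> 0 \<and>
          (\<forall>y\<in>X. Max ((\<lambda>l. - lam * \<bar>l - y\<bar> + ?f l) ` X) \<le> h y)}"
    by (rule W.duality)
  also have "\<dots> = Inf {lam * \<delta> + (\<Sum>y\<in>X. h y * P x a y) | lam h. lam \<ge> 0 \<and>
          (\<forall>y\<in>X. Max ((\<lambda>l. - lam * \<bar>l - y\<bar> + cost U l
                 + (\<Sum>a'\<in>A. robustQ X E U A \<delta> P \<pi> l a' * \<pi> l a')) ` X) \<le> h y)}"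
    by (simp only: add.assoc)
  finally show ?thesis .
qed

end
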